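(* Let $n\geq 10$ and $t\geq 3\log_2 n$ be positive integers. Then there exists an orientation $D$ of the complete bipartite graph $K_{n,n}$, with parts $X$ and $Y$, such that for every $I\subseteq X$ and $J\subseteq Y$ with $|I|=|J|=t$, the induced subdigraph $D[I\cup J]$ contains a directed cycle.
   Context: An orientation of a graph is the digraph obtained by giving each edge one of its two directions. *)

theory Defs
  imports Complex_Main
begin

text \<open>Complete bipartite graph K_{n,n}: vertices Inl i (i < n, part X) and Inr j (j < n, part Y).
 An orientation is encoded by d :: nat => nat => bool: d i j means the edge x_i y_j is
 oriented x_i -> y_j, otherwise y_j -> x_i. Every orientation arises this way.\<close>

fun orient_arc :: "(nat \<Rightarrow> nat \<Rightarrow> bool) \<Rightarrow> nat + nat \<Rightarrow> nat + nat \<Rightarrow> bool" where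
  "orient_arc d (Inl i) (Inr j) = d i j"
| "orient_arc d (Inr j) (Inl i) = (\<not> d i j)"
| "orient_arc d _ _ = False"

definition has_dcycle :: "('v \<Rightarrow> 'v \<Rightarrow> bool) \<Rightarrow> 'v set \<Rightarrow> bool" where
  "has_dcycle A V \<longleftrightarrow> (\<exists>vs. 2 \<le> length vs \<and> distinct vs \<and> set vs \<subseteq> V \<and>
      (\<forall>k < length vs. A (vs ! k) (vs ! ((k + 1) mod length vs))))"

end

theory Submission
  imports Defs "HOL-Library.FuncSet"
begin


lemma step3: "(real m + 2) ^ (m+1) \<le> 3 * (real m + 1) ^ (m+1)"
proof -
  have pos: "real m + 1 > 0" by simp
  have "(1 + 1/(real m+1)) ^ (m+1) \<le> exp (1/(real m+1)) ^ (m+1)"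
    by (intro power_mono exp_ge_add_one_self) (auto simp: add_pos_nonneg)
  also have "\<dots> = exp (real (m+1) * (1/(real m+1)))" by (rule exp_of_nat_mult[symmetric])
  also have "\<dots> = exp 1" using pos by simp
  also have "\<dots> \<le> 3" by (rule exp_le)
  finally have h: "(1 + 1/(real m+1)) ^ (m+1) \<le> 3" .
  have "(real m + 2) = (real m + 1) * (1 + 1/(real m+1))" using pos by (simp add: field_simps)
  hence "(real m + 2) ^ (m+1) = (real m + 1) ^ (m+1) * (1 + 1/(real m+1)) ^ (m+1)"
    by (simp add: power_mult_distrib)
  also have "\<dots> \<le> (real m + 1) ^ (m+1) * 3" using h by (intro mult_left_mono) auto
  finally show ?thesis by simp
qed

lemma powfact: "(real t + 1) ^ t \<le> 3 ^ t * fact t"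
proof (induction t)
  case 0 then show ?case by simp
next
  case (Suc m)
  have "(real (Suc m) + 1) ^ Suc m = (real m + 2) ^ (m+1)" by (simp add: add.commute)
  also have "\<dots> \<le> 3 * (real m + 1) ^ (m+1)" by (rule step3)
  also have "\<dots> = 3 * (real m + 1) * (real m + 1) ^ m" by simp
  also have "\<dots> \<le> 3 * (real m + 1) * (3 ^ m * fact m)"
    using Suc.IH by (intro mult_left_mono) auto
  also have "\<dots> = 3 ^ Suc m * fact (Suc m)" by (simp add: algebra_simps)
  finally show ?case .
qed

lemma numeric:
  fixes n t :: nat
  assumes "n \<ge> 10" and "t > 0" and "real t \<ge> 3 * log 2 (real n)" and "t \<le> n"
  shows "((n choose t) * (t+1)^t)^2 < (2::nat)^(t*t)"
proof -
  have nr: "real n \<ge> 10" using assms by simp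
  have a: "real (n choose t) * (real t + 1) ^ t \<le> (3 * real n) ^ t"
  proof -
    have "real (n choose t) * (real t + 1) ^ t \<le> real (n choose t) * (3 ^ t * fact t)"
      by (intro mult_left_mono powfact) auto
    also have "\<dots> = 3 ^ t * (real (n choose t) * fact t)" by simp
    also have "\<dots> \<le> 3 ^ t * real n ^ t"
    proof -
      have "(n choose t) * fact t \<le> n ^ t" by (rule binomial_fact_pow)
      hence "real ((n choose t) * fact t) \<le> real (n ^ t)" by linarith
      thus ?thesis by (intro mult_left_mono) (auto simp: of_nat_mult)
    qed
    finally show ?thesis by (simp add: power_mult_distrib)
  qed
  have n3: "real n ^ 3 \<le> 2 ^ t"
  proof -
    have "2 powr (3 * log 2 (real n)) = (2 powr (log 2 (real n))) powr 3"
      by (simp add: powr_powr mult.commute)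
    also have "\<dots> = real n powr 3" using nr by simp
    also have "\<dots> = real n ^ 3" using nr by (simp add: powr_realpow)
    finally have "real n ^ 3 = 2 powr (3 * log 2 (real n))" by simp
    also have "\<dots> \<le> 2 powr (real t)" using assms(3) by (intro powr_mono) auto
    also have "\<dots> = 2 ^ t" by (simp add: powr_realpow)
    finally show ?thesis .
  qed
  have "9 * real n ^ 2 < real n ^ 3" using nr by (simp add: power2_eq_square power3_eq_cube)
  hence b: "(3 * real n) ^ 2 < 2 ^ t" using n3 by (simp add: power_mult_distrib)
  have "(real (n choose t) * (real t + 1) ^ t) ^ 2 \<le> ((3 * real n) ^ t) ^ 2"
    using a by (intro power_mono) auto
  also have "\<dots> = ((3 * real n) ^ 2) ^ t" by (simp only: power_mult[symmetric] mult.commute)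
  also have "\<dots> < (2 ^ t) ^ t" using b assms(2) nr
    by (intro power_strict_mono) auto
  also have "\<dots> = 2 ^ (t * t)" by (simp add: power_mult)
  finally have "(real (n choose t) * (real t + 1) ^ t) ^ 2 < 2 ^ (t*t)" .
  hence "real (((n choose t) * (t+1)^t)^2) < real ((2::nat)^(t*t))" by (simp add: add.commute)
  thus ?thesis by linarith
qed
lemma cyc4:
  assumes "d i j" "\<not> d i' j" "d i' j'" "\<not> d i j'" "i\<in>I" "i'\<in>I" "j\<in>J" "j'\<in>J"
  shows "has_dcycle (orient_arc d) (Inl`I \<union> Inr`J)"
proof -
  have "i\<noteq>i'" "j\<noteq>j'" using assms by auto
  let ?vs = "[Inl i, Inr j, Inl i', Inr j']"
  have cyc: "\<forall>k < length ?vs. orient_arc d (?vs ! k) (?vs ! ((k + 1) mod length ?vs))"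
  proof (intro allI impI)
    fix k assume "k < length ?vs"
    hence "k = 0 \<or> k = 1 \<or> k = 2 \<or> k = 3" by auto
    thus "orient_arc d (?vs ! k) (?vs ! ((k + 1) mod length ?vs))" using assms by auto
  qed
  have "2 \<le> length ?vs \<and> distinct ?vs \<and> set ?vs \<subseteq> Inl`I \<union> Inr`J"
    using assms \<open>i\<noteq>i'\<close> \<open>j\<noteq>j'\<close> by auto
  thus ?thesis unfolding has_dcycle_def using cyc by blast
qed

definition NC :: "(nat \<times> nat) set \<Rightarrow> nat set \<Rightarrow> nat set \<Rightarrow> bool" where
  "NC E I J \<longleftrightarrow> (\<forall>i\<in>I. \<forall>i'\<in>I. \<forall>j\<in>J. \<forall>j'\<in>J. (i,j)\<in>E \<longrightarrow> (i',j')\<in>E \<longrightarrow> (i,j')\<in>E \<or> (i',j)\<in>E)"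

definition rs :: "(nat \<times> nat) set \<Rightarrow> nat set \<Rightarrow> nat \<Rightarrow> nat" where
  "rs E J i = card {j\<in>J. (i,j)\<in>E}"
definition cs :: "(nat \<times> nat) set \<Rightarrow> nat set \<Rightarrow> nat \<Rightarrow> nat" where
  "cs E I j = card {i\<in>I. (i,j)\<in>E}"

lemma bad_NC:
  assumes "\<not> has_dcycle (orient_arc (\<lambda>i j. (i,j)\<in>D)) (Inl`I \<union> Inr`J)"
  shows "NC D I J"
  unfolding NC_def
proof (intro ballI impI)
  fix i i' j j' assume h: "i\<in>I" "i'\<in>I" "j\<in>J" "j'\<in>J" "(i,j)\<in>D" "(i',j')\<in>D"
  show "(i,j')\<in>D \<or> (i',j)\<in>D"
  proof (rule ccontr)
    assume "\<not> ((i,j')\<in>D \<or> (i',j)\<in>D)"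
    hence "has_dcycle (orient_arc (\<lambda>i j. (i,j)\<in>D)) (Inl`I \<union> Inr`J)"
      using h by (intro cyc4[of _ i j i' j']) auto
    thus False using assms by simp
  qed
qed

lemma charac:
  assumes fin: "finite I" "finite J" and nc: "NC E I J" and ij: "i\<in>I" "j\<in>J"
  shows "(i,j)\<in>E \<longleftrightarrow> card {j'\<in>J. cs E I j \<le> cs E I j'} \<le> rs E J i"
proof
  assume e: "(i,j)\<in>E"
  have "{j'\<in>J. cs E I j \<le> cs E I j'} \<subseteq> {j\<in>J. (i,j)\<in>E}"
  proof
    fix j' assume j': "j' \<in> {j'\<in>J. cs E I j \<le> cs E I j'}"
    show "j' \<in> {j\<in>J. (i,j)\<in>E}"
    proof (rule ccontr)
      assume ne: "j' \<notin> {j\<in>J. (i,j)\<in>E}"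
      have "{i'\<in>I. (i',j')\<in>E} \<subset> {i'\<in>I. (i',j)\<in>E}"
      proof
        show "{i'\<in>I. (i',j')\<in>E} \<subseteq> {i'\<in>I. (i',j)\<in>E}"
          using nc e ne j' ij unfolding NC_def by blast
        show "{i'\<in>I. (i',j')\<in>E} \<noteq> {i'\<in>I. (i',j)\<in>E}" using e ne j' ij by blast
      qed
      hence "cs E I j' < cs E I j" unfolding cs_def using fin by (intro psubset_card_mono) auto
      thus False using j' by simp
    qed
  qed
  thus "card {j'\<in>J. cs E I j \<le> cs E I j'} \<le> rs E J i" unfolding rs_def
    using fin by (intro card_mono) auto
next
  assume c: "card {j'\<in>J. cs E I j \<le> cs E I j'} \<le> rs E J i"
  show "(i,j)\<in>E"
  proof (rule ccontr)
    assume ne: "(i,j)\<notin>E"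
    have sub: "{j\<in>J. (i,j)\<in>E} \<subseteq> {j'\<in>J. cs E I j < cs E I j'}"
    proof
      fix j' assume j': "j' \<in> {j\<in>J. (i,j)\<in>E}"
      have "{i'\<in>I. (i',j)\<in>E} \<subset> {i'\<in>I. (i',j')\<in>E}"
      proof
        show "{i'\<in>I. (i',j)\<in>E} \<subseteq> {i'\<in>I. (i',j')\<in>E}"
          using nc ne j' ij unfolding NC_def by blast
        show "{i'\<in>I. (i',j)\<in>E} \<noteq> {i'\<in>I. (i',j')\<in>E}" using ne j' ij by blast
      qed
      hence "cs E I j < cs E I j'" unfolding cs_def using fin by (intro psubset_card_mono) auto
      thus "j' \<in> {j'\<in>J. cs E I j < cs E I j'}" using j' by simp
    qed
    have "{j'\<in>J. cs E I j < cs E I j'} \<subset> {j'\<in>J. cs E I j \<le> cs E I j'}"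
      using ij by auto
    hence "card {j'\<in>J. cs E I j < cs E I j'} < card {j'\<in>J. cs E I j \<le> cs E I j'}"
      using fin by (intro psubset_card_mono) auto
    moreover have "rs E J i \<le> card {j'\<in>J. cs E I j < cs E I j'}"
      unfolding rs_def using sub fin by (intro card_mono) auto
    ultimately show False using c by simp
  qed
qed

definition Bad :: "nat \<Rightarrow> nat set \<Rightarrow> nat set \<Rightarrow> (nat \<times> nat) set set" where
  "Bad n I J = {D \<in> Pow ({..<n} \<times> {..<n}). \<not> has_dcycle (orient_arc (\<lambda>i j. (i,j)\<in>D)) (Inl`I \<union> Inr`J)}"

lemma card_Bad:
  assumes I: "I \<subseteq> {..<n}" "card I = t" and J: "J \<subseteq> {..<n}" "card J = t"
  shows "card (Bad n I J) \<le> (t+1)^t * (t+1)^t * 2^(n*n - t*t)"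
proof -
  have fin: "finite I" "finite J" using I J finite_subset by auto
  define A where "A = {..<n} \<times> {..<n}"
  define f where "f = (\<lambda>D. ((\<lambda>i\<in>I. rs D J i), (\<lambda>j\<in>J. cs D I j), D - I \<times> J))"
  have inj: "inj_on f (Bad n I J)"
  proof (rule inj_onI)
    fix D D' assume D: "D \<in> Bad n I J" and D': "D' \<in> Bad n I J" and eq: "f D = f D'"
    have ncD: "NC D I J" using D unfolding Bad_def by (auto intro: bad_NC)
    have ncD': "NC D' I J" using D' unfolding Bad_def by (auto intro: bad_NC)
    have e1: "(\<lambda>i\<in>I. rs D J i) = (\<lambda>i\<in>I. rs D' J i)"
      and e2: "(\<lambda>j\<in>J. cs D I j) = (\<lambda>j\<in>J. cs D' I j)" using eq unfolding f_def by simp_all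
    have r: "\<And>i. i \<in> I \<Longrightarrow> rs D J i = rs D' J i"
    proof -
      fix i assume "i \<in> I" thus "rs D J i = rs D' J i" using fun_cong[OF e1, of i] by simp
    qed
    have c: "\<And>j. j \<in> J \<Longrightarrow> cs D I j = cs D' I j"
    proof -
      fix j assume "j \<in> J" thus "cs D I j = cs D' I j" using fun_cong[OF e2, of j] by simp
    qed
    have d: "D - I \<times> J = D' - I \<times> J" using eq unfolding f_def by simp
    show "D = D'"
    proof (intro set_eqI)
      fix x show "x \<in> D \<longleftrightarrow> x \<in> D'"
      proof (cases "x \<in> I \<times> J")
        case True
        then obtain i j where x: "x = (i,j)" "i \<in> I" "j \<in> J" by auto
        have s: "{j'\<in>J. cs D I j \<le> cs D I j'} = {j'\<in>J. cs D' I j \<le> cs D' I j'}"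
        proof (rule Collect_cong)
          fix j' show "(j'\<in>J \<and> cs D I j \<le> cs D I j') = (j'\<in>J \<and> cs D' I j \<le> cs D' I j')"
            using c[of j'] c[OF x(3)] by auto
        qed
        have e: "(i,j)\<in>D \<longleftrightarrow> card {j'\<in>J. cs D I j \<le> cs D I j'} \<le> rs D J i"
          by (rule charac[OF fin ncD x(2,3)])
        have e': "(i,j)\<in>D' \<longleftrightarrow> card {j'\<in>J. cs D' I j \<le> cs D' I j'} \<le> rs D' J i"
          by (rule charac[OF fin ncD' x(2,3)])
        show ?thesis unfolding x(1) e e' s r[OF x(2)] ..
      next
        case False thus ?thesis using d by blast
      qed
    qed
  qed
  have img: "f ` Bad n I J \<subseteq> (I \<rightarrow>\<^sub>E {..t}) \<times> (J \<rightarrow>\<^sub>E {..t}) \<times> Pow (A - I \<times> J)"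
  proof
    fix y assume "y \<in> f ` Bad n I J"
    then obtain D where D: "D \<in> Bad n I J" "y = f D" by auto
    have "\<And>i. rs D J i \<le> t" unfolding rs_def using fin J by (metis (no_types, lifting) card_mono mem_Collect_eq subsetI)
    moreover have "\<And>j. cs D I j \<le> t" unfolding cs_def using fin I by (metis (no_types, lifting) card_mono mem_Collect_eq subsetI)
    moreover have "D \<subseteq> A" using D unfolding Bad_def A_def by auto
    ultimately show "y \<in> (I \<rightarrow>\<^sub>E {..t}) \<times> (J \<rightarrow>\<^sub>E {..t}) \<times> Pow (A - I \<times> J)"
      using D unfolding f_def by auto
  qed
  have finA: "finite A" unfolding A_def by simp
  have "card (Bad n I J) \<le> card ((I \<rightarrow>\<^sub>E {..t}) \<times> (J \<rightarrow>\<^sub>E {..t}) \<times> Pow (A - I \<times> J))"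
    by (rule card_inj_on_le[OF inj img]) (use fin finA in \<open>auto intro!: finite_PiE\<close>)
  also have "\<dots> = (t+1)^t * (t+1)^t * 2^(card (A - I \<times> J))"
    using fin finA I J by (simp add: card_PiE card_cartesian_product card_Pow)
  also have "card (A - I \<times> J) = n*n - t*t"
  proof -
    have "I \<times> J \<subseteq> A" using I J unfolding A_def by auto
    hence "card (A - I \<times> J) = card A - card (I \<times> J)" using finA by (simp add: card_Diff_subset finite_subset)
    thus ?thesis unfolding A_def using I J by (simp add: card_cartesian_product)
  qed
  finally show ?thesis .
qed

theorem mainTheorem5:
  fixes n t :: nat
  assumes "n \<ge> 10" and "t > 0" and "real t \<ge> 3 * log 2 (real n)"
  shows "\<exists>d :: nat \<Rightarrow> nat \<Rightarrow> bool. \<forall>I J. I \<subseteq> {..<n} \<and> J \<subseteq> {..<n} \<and> card I = t \<and> card J = t \<longrightarrow>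
           has_dcycle (orient_arc d) (Inl ` I \<union> Inr ` J)"
proof -
  define T where "T = {I. I \<subseteq> {..<n} \<and> card I = t}"
  define A where "A = {..<n} \<times> {..<n}"
  define U where "U = (\<Union>p\<in>T \<times> T. Bad n (fst p) (snd p))"
  have cT: "card T = n choose t" unfolding T_def using n_subsets[of "{..<n}" t] by simp
  have finT: "finite T" unfolding T_def by (rule finite_subset[of _ "Pow {..<n}"]) auto
  have s1: "card U \<le> (\<Sum>p\<in>T \<times> T. card (Bad n (fst p) (snd p)))"
    unfolding U_def using finT by (intro card_UN_le) auto
  have s2: "(\<Sum>p\<in>T \<times> T. card (Bad n (fst p) (snd p))) \<le> (\<Sum>p\<in>T \<times> T. (t+1)^t * (t+1)^t * 2^(n*n - t*t))"
    by (intro sum_mono card_Bad) (auto simp: T_def)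
  have s3a: "(\<Sum>p\<in>T \<times> T. (t+1)^t * (t+1)^t * 2^(n*n - t*t)) = card (T \<times> T) * ((t+1)^t * (t+1)^t * 2^(n*n - t*t))"
    by simp
  have s3b: "card (T \<times> T) = (n choose t) * (n choose t)" using cT by (simp add: card_cartesian_product)
  have s3c: "(n choose t) * (n choose t) * ((t+1)^t * (t+1)^t * 2^(n*n - t*t)) = ((n choose t) * (t+1)^t)^2 * 2^(n*n - t*t)"
    by (simp add: power2_eq_square power_mult_distrib)
  have s4: "((n choose t) * (t+1)^t)^2 * 2^(n*n - t*t) < 2^(n*n)"
  proof (cases "t \<le> n")
    case True
    have h1: "((n choose t) * (t+1)^t)^2 * 2^(n*n - t*t) < 2^(t*t) * 2^(n*n - t*t)"
      using numeric[OF assms True] by simp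
    have "t*t \<le> n*n" by (intro mult_le_mono True)
    hence e: "t*t + (n*n - t*t) = n*n" by simp
    have "(2::nat)^(t*t) * 2^(n*n - t*t) = 2^(t*t + (n*n - t*t))" by (rule power_add[symmetric])
    hence h2: "(2::nat)^(t*t) * 2^(n*n - t*t) = 2^(n*n)" unfolding e .
    show ?thesis using h1 h2 by linarith
  next
    case False thus ?thesis by (simp add: binomial_eq_0)
  qed
  have s5: "(2::nat)^(n*n) = card (Pow A)" unfolding A_def by (simp add: card_Pow card_cartesian_product)
  have s6: "card U \<le> ((n choose t) * (t+1)^t)^2 * 2^(n*n - t*t)"
    using order_trans[OF s1 s2] unfolding s3a s3b s3c .
  have lt: "card U < card (Pow A)" using le_less_trans[OF s6 s4] unfolding s5 .
  have "U \<subseteq> Pow A" unfolding U_def Bad_def A_def by auto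
  have "Pow A - U \<noteq> {}"
  proof
    assume "Pow A - U = {}"
    hence "Pow A \<subseteq> U" by blast
    moreover have "finite U" using \<open>U \<subseteq> Pow A\<close> unfolding A_def by (rule finite_subset) simp
    ultimately have "card (Pow A) \<le> card U" by (rule card_mono[rotated])
    thus False using lt by simp
  qed
  then obtain D where D: "D \<in> Pow A" "D \<notin> U" by auto
  show ?thesis
  proof (intro exI[of _ "\<lambda>i j. (i,j) \<in> D"] allI impI)
    fix I J assume h: "I \<subseteq> {..<n} \<and> J \<subseteq> {..<n} \<and> card I = t \<and> card J = t"
    hence "(I,J) \<in> T \<times> T" unfolding T_def by auto
    hence "Bad n (fst (I,J)) (snd (I,J)) \<subseteq> U" unfolding U_def by (rule UN_upper)
    hence "Bad n I J \<subseteq> U" by simp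
    hence "D \<notin> Bad n I J" using D(2) by blast
    thus "has_dcycle (orient_arc (\<lambda>i j. (i,j) \<in> D)) (Inl ` I \<union> Inr ` J)"
      using D(1) unfolding Bad_def A_def by blast
  qed
qed

end
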